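(* Let $(S,+)$ be an infinite semigroup which is left weakly cancellative and has no idempotent element. Let $A\subseteq S$ be an IP set. Then $A$ can be partitioned into countably infinitely many pairwise disjoint sets, each of which is an IP set in $S$.
   Context: A semigroup $(S,+)$ is left weakly cancellative if for all $a,b\in S$ the set $\{x\in S: a+x=b\}$ is finite. An element $e$ is idempotent if $e+e=e$. For a sequence $\langle x_n\rangle_{n=1}^\infty$ in $S$, $\mathrm{FS}(\langle x_n\rangle_{n=1}^\infty)=\{\sum_{n\in H}x_n : H\text{ a nonempty finite subset of }\mathbb{N}\}$, where sums are taken in increasing order of indices. A set $A\subseteq S$ is an IP set if there is a sequence $\langle x_n\rangle_{n=1}^\infty$ in $S$ with $\mathrm{FS}(\langle x_n\rangle_{n=1}^\infty)\subseteq A$. *)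

theory Defs
  imports Main
begin

fun seqsum :: "(nat \<Rightarrow> 'a::semigroup_add) \<Rightarrow> nat list \<Rightarrow> 'a" where
  "seqsum x [h] = x h"
| "seqsum x (h # h' # hs) = x h + seqsum x (h' # hs)"

definition FS :: "(nat \<Rightarrow> 'a::semigroup_add) \<Rightarrow> 'a set" where
  "FS x = {seqsum x (sorted_list_of_set H) | H. finite H \<and> H \<noteq> {}}"

definition IP_set :: "'a::semigroup_add set \<Rightarrow> bool" where
  "IP_set A \<longleftrightarrow> (\<exists>x. FS x \<subseteq> A)"

definition left_weakly_cancellative :: "'a::semigroup_add itself \<Rightarrow> bool" where
  "left_weakly_cancellative _ \<longleftrightarrow> (\<forall>a b::'a. finite {x. a + x = b})"

end

theory Submission
  imports Defs "HOL-Library.Nat_Bijection"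
begin

definition sig :: "(nat \<Rightarrow> 'a::semigroup_add) \<Rightarrow> nat set \<Rightarrow> 'a" where
  "sig x H = seqsum x (sorted_list_of_set H)"

lemma seqsum_cons: "l \<noteq> [] \<Longrightarrow> seqsum x (a # l) = x a + seqsum x l"
  by (cases l) auto

lemma sig_single[simp]: "sig x {a} = x a"
  by (simp add: sig_def)

lemma sig_insert_min:
  assumes "finite H" "H \<noteq> {}" "\<forall>h\<in>H. a < h"
  shows "sig x (insert a H) = x a + sig x H"
proof -
  have m: "Min (insert a H) = a" using assms by (auto intro!: Min_eqI simp: less_imp_le)
  have r: "insert a H - {a} = H" using assms by auto
  have "sorted_list_of_set (insert a H) = a # sorted_list_of_set H"
    using sorted_list_of_set_nonempty[of "insert a H"] assms m r by simp
  moreover have "sorted_list_of_set H \<noteq> []" using assms by simp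
  ultimately show ?thesis by (simp add: sig_def seqsum_cons)
qed

lemma min_induct_ne[consumes 2, case_names single step]:
  assumes "finite (G::nat set)" "G \<noteq> {}"
    and "\<And>a. P {a}"
    and "\<And>a G. finite G \<Longrightarrow> G \<noteq> {} \<Longrightarrow> \<forall>g\<in>G. a < g \<Longrightarrow> P G \<Longrightarrow> P (insert a G)"
  shows "P G"
  using assms(1,2)
proof (induction "card G" arbitrary: G rule: less_induct)
  case less
  show ?case
  proof (cases "card G = 1")
    case True
    then obtain a where "G = {a}" by (auto simp: card_1_singleton_iff)
    then show ?thesis using assms(3) by simp
  next
    case False
    define a where "a = Min G"
    define G' where "G' = G - {a}"
    have aG: "a \<in> G" using less(2,3) a_def by simp
    have G: "G = insert a G'" using aG G'_def by auto
    have ne: "G' \<noteq> {}"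
    proof
      assume "G' = {}"
      then have "G = {a}" using G by simp
      then show False using False by simp
    qed
    have fin: "finite G'" using less(2) G'_def by simp
    have lt: "\<forall>g\<in>G'. a < g"
    proof
      fix g assume "g \<in> G'"
      then have "g \<in> G" "g \<noteq> a" using G'_def by auto
      then have "a \<le> g" using less(2) a_def by simp
      then show "a < g" using \<open>g \<noteq> a\<close> by simp
    qed
    have "card G' < card G" using G'_def aG less(2) by (metis card_Diff1_less)
    then have "P G'" using less(1) fin ne by blast
    then show ?thesis using assms(4)[OF fin ne lt] G by simp
  qed
qed

lemma sig_union:
  assumes "finite H1" "H1 \<noteq> {}" "finite H2" "H2 \<noteq> {}" "\<forall>a\<in>H1. \<forall>b\<in>H2. a < b"
  shows "sig x (H1 \<union> H2) = sig x H1 + sig x H2"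
  using assms(1,2,5)
proof (induction H1 rule: min_induct_ne)
  case (single a)
  then show ?case using sig_insert_min[OF assms(3,4)] by simp
next
  case (step a G)
  have "sig x (insert a G \<union> H2) = sig x (insert a (G \<union> H2))" by simp
  also have "\<dots> = x a + sig x (G \<union> H2)"
    using step assms(3,4) by (intro sig_insert_min) auto
  also have "\<dots> = x a + (sig x G + sig x H2)" using step by simp
  also have "\<dots> = sig x (insert a G) + sig x H2"
    using sig_insert_min[OF step(1,2,3), of x] by (simp add: add.assoc)
  finally show ?case .
qed

lemma sig_blocks:
  assumes fin: "\<And>n. finite (B n)" and ne: "\<And>n. B n \<noteq> {}"
    and mono: "\<And>n m a b. n < m \<Longrightarrow> a \<in> B n \<Longrightarrow> b \<in> B m \<Longrightarrow> a < b"
    and "finite G" "G \<noteq> {}"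
  shows "sig (\<lambda>n. sig x (B n)) G = sig x (\<Union>n\<in>G. B n)"
  using assms(4,5)
proof (induction G rule: min_induct_ne)
  case (single a)
  then show ?case by simp
next
  case (step a G)
  have "sig (\<lambda>n. sig x (B n)) (insert a G) = sig x (B a) + sig (\<lambda>n. sig x (B n)) G"
    using sig_insert_min[OF step(1,2,3), of "\<lambda>n. sig x (B n)"] by simp
  also have "\<dots> = sig x (B a) + sig x (\<Union>n\<in>G. B n)" using step by simp
  also have "\<dots> = sig x (B a \<union> (\<Union>n\<in>G. B n))"
    using step fin ne mono by (intro sig_union[symmetric]) auto
  finally show ?case by simp
qed

lemma sig_in_FS: "finite H \<Longrightarrow> H \<noteq> {} \<Longrightarrow> sig x H \<in> FS x"
  unfolding FS_def sig_def by blast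


fun mulv :: "nat \<Rightarrow> 'a::semigroup_add \<Rightarrow> 'a" where
  "mulv 0 v = v"
| "mulv (Suc k) v = v + mulv k v"

lemma mulv_add: "mulv a v + mulv b v = mulv (a + b + 1) v"
  by (induction a) (auto simp: add.assoc)

lemma mulv_inf:
  assumes noid: "\<forall>e::'a::semigroup_add. e + e \<noteq> e"
  shows "infinite (range (\<lambda>k. mulv k (v::'a)))"
proof
  assume fin: "finite (range (\<lambda>k. mulv k v))"
  have "\<not> inj (\<lambda>k. mulv k v)"
    using fin finite_imageD by blast
  then obtain k l where kl: "k < l" "mulv k v = mulv l v"
    unfolding inj_def by (metis linorder_neqE_nat)
  define p where "p = l - k"
  have p: "p \<ge> 1" "l = k + p" using kl p_def by auto
  have sh: "mulv (k + j) v = mulv (k + j + p) v" for j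
  proof (induction j)
    case 0 then show ?case using kl p by simp
  next
    case (Suc j) then show ?case by simp
  qed
  have per: "mulv (k + j + q * p) v = mulv (k + j) v" for j q
  proof (induction q)
    case 0 then show ?case by simp
  next
    case (Suc q)
    have "mulv (k + j + Suc q * p) v = mulv (k + (j + q * p) + p) v" by (simp add: algebra_simps)
    also have "\<dots> = mulv (k + (j + q*p)) v" using sh by simp
    finally show ?case using Suc by (simp add: algebra_simps)
  qed
  define n where "n = (k + 1) * p - 1"
  have "k * p \<ge> k" using p by simp
  then have nk: "n \<ge> k" using p n_def \<open>k * p \<ge> k\<close> by (simp only: add_mult_distrib)
  have "mulv n v + mulv n v = mulv (n + n + 1) v" by (rule mulv_add)
  also have "n + n + 1 = k + (n - k) + (k+1) * p" using p n_def nk by (simp add: algebra_simps)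
  also have "mulv (k + (n - k) + (k+1) * p) v = mulv n v" using per[of "n - k" "k+1"] nk by simp
  finally show False using noid by blast
qed

lemma sig_const:
  assumes "finite H" "H \<noteq> {}" "\<forall>h\<in>H. x h = v"
  shows "sig x H = mulv (card H - 1) v"
  using assms
proof (induction H rule: min_induct_ne)
  case (single a) then show ?case by simp
next
  case (step a G)
  have "a \<notin> G" using step by auto
  moreover have "card G \<ge> 1" using step by (simp add: Suc_leI card_gt_0_iff)
  ultimately have c: "card (insert a G) - 1 = Suc (card G - 1)" using step by simp
  show ?case using sig_insert_min[OF step(1,2,3), of x] step c by simp
qed

lemma tail_inf:
  assumes noid: "\<forall>e::'a::semigroup_add. e + e \<noteq> e"
  shows "infinite {sig (x::nat\<Rightarrow>'a) H | H. finite H \<and> H \<noteq> {} \<and> (\<forall>h\<in>H. M < h)}"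
    (is "infinite ?C")
proof
  assume fin: "finite ?C"
  have "x ` {M<..} \<subseteq> ?C"
  proof
    fix y assume "y \<in> x ` {M<..}"
    then obtain n where "n > M" "y = x n" by auto
    moreover have "sig x {n} = x n" by simp
    ultimately have "finite {n} \<and> {n} \<noteq> {} \<and> (\<forall>h\<in>{n}. M < h) \<and> y = sig x {n}" by simp
    then show "y \<in> ?C" by blast
  qed
  then have "finite (x ` {M<..})" by (rule finite_subset[OF _ fin])
  then have "\<exists>n0\<in>{M<..}. infinite {n \<in> {M<..}. x n = x n0}"
    using pigeonhole_infinite[of "{M<..}" x] infinite_Ioi[of M] by blast
  then obtain n0 where n0: "n0 \<in> {M<..}" "infinite {n \<in> {M<..}. x n = x n0}" by blast
  have "range (\<lambda>k. mulv k (x n0)) \<subseteq> ?C"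
  proof
    fix y assume "y \<in> range (\<lambda>k. mulv k (x n0))"
    then obtain k where k: "y = mulv k (x n0)" by auto
    obtain B where B: "finite B" "card B = Suc k" "B \<subseteq> {n \<in> {M<..}. x n = x n0}"
      using infinite_arbitrarily_large[OF n0(2)] by blast
    have "B \<noteq> {}" using B by auto
    then have "sig x B = mulv k (x n0)" using sig_const[of B x "x n0"] B by auto
    moreover have "\<forall>h\<in>B. M < h" using B by auto
    ultimately have "finite B \<and> B \<noteq> {} \<and> (\<forall>h\<in>B. M < h) \<and> y = sig x B"
      using B \<open>B \<noteq> {}\<close> k by simp
    then show "y \<in> ?C" by blast
  qed
  then have "finite (range (\<lambda>k. mulv k (x n0)))" by (rule finite_subset[OF _ fin])
  then show False using mulv_inf[OF noid] by blast
qed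


definition col :: "nat \<Rightarrow> nat" where "col t = fst (prod_decode t)"

definition good :: "(nat \<Rightarrow> 'a::semigroup_add) \<Rightarrow> (nat \<Rightarrow> nat set) \<Rightarrow> nat \<Rightarrow> nat set \<Rightarrow> bool" where
  "good x f t H \<longleftrightarrow> finite H \<and> H \<noteq> {} \<and> (\<forall>s<t. \<forall>a\<in>f s. \<forall>b\<in>H. a < b) \<and>
    (\<forall>F G. F \<subseteq> {s. s < t \<and> col s = col t} \<longrightarrow> G \<subseteq> {s. s < t \<and> col s \<noteq> col t} \<longrightarrow> G \<noteq> {} \<longrightarrow>
       sig x ((\<Union>s\<in>F. f s) \<union> H) \<noteq> sig x (\<Union>s\<in>G. f s))"

lemma good_ex:
  fixes x :: "nat \<Rightarrow> 'a::semigroup_add"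
  assumes wlc: "left_weakly_cancellative TYPE('a)"
    and noid: "\<forall>e::'a. e + e \<noteq> e"
    and ff: "\<forall>s<t. finite (f s) \<and> f s \<noteq> {}"
  shows "\<exists>H. good x f t H"
proof -
  define U where "U = (\<Union>s\<in>{..<t}. f s)"
  have finU: "finite U" using ff U_def by auto
  define M where "M = Max (insert 0 U)"
  have M: "\<forall>a\<in>U. a \<le> M" using finU M_def by auto
  define E where "E = (\<Union>F\<in>Pow {..<t}. \<Union>G\<in>Pow {..<t}. if F = {} then {sig x (\<Union>s\<in>G. f s)}
      else {v. sig x (\<Union>s\<in>F. f s) + v = sig x (\<Union>s\<in>G. f s)})"
  have finE: "finite E" unfolding E_def using wlc
    by (auto simp: left_weakly_cancellative_def)
  define C where "C = {sig x H | H. finite H \<and> H \<noteq> {} \<and> (\<forall>h\<in>H. M < h)}"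
  have "infinite C" unfolding C_def by (rule tail_inf[OF noid])
  then have "\<not> C \<subseteq> E" using finE finite_subset by blast
  then obtain H where H: "finite H" "H \<noteq> {}" "\<forall>h\<in>H. M < h" "sig x H \<notin> E"
    unfolding C_def by blast
  have ord: "\<forall>s<t. \<forall>a\<in>f s. \<forall>b\<in>H. a < b"
  proof (intro allI impI ballI)
    fix s a b assume "s < t" "a \<in> f s" "b \<in> H"
    then have "a \<le> M" using M U_def by auto
    then show "a < b" using H(3) \<open>b \<in> H\<close> by fastforce
  qed
  have sep: "sig x ((\<Union>s\<in>F. f s) \<union> H) \<noteq> sig x (\<Union>s\<in>G. f s)"
    if F: "F \<subseteq> {s. s < t \<and> col s = col t}" and G: "G \<subseteq> {s. s < t \<and> col s \<noteq> col t}" and "G \<noteq> {}"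
    for F G
  proof
    assume eq: "sig x ((\<Union>s\<in>F. f s) \<union> H) = sig x (\<Union>s\<in>G. f s)"
    have FP: "F \<in> Pow {..<t}" and GP: "G \<in> Pow {..<t}" using F G by auto
    show False
    proof (cases "F = {}")
      case True
      then have "sig x H \<in> E" using eq FP GP unfolding E_def by auto
      then show False using H by blast
    next
      case False
      have finF: "finite (\<Union>s\<in>F. f s)" using F ff finite_subset[of F "{..<t}"] by auto
      have neF: "(\<Union>s\<in>F. f s) \<noteq> {}" using False F ff by auto
      have "sig x ((\<Union>s\<in>F. f s) \<union> H) = sig x (\<Union>s\<in>F. f s) + sig x H"
        using finF neF H ord F by (intro sig_union) auto
      then have "sig x H \<in> {v. sig x (\<Union>s\<in>F. f s) + v = sig x (\<Union>s\<in>G. f s)}" using eq by simp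
      moreover have "{v. sig x (\<Union>s\<in>F. f s) + v = sig x (\<Union>s\<in>G. f s)} \<subseteq> E"
        unfolding E_def using FP GP False by (intro UN_I[OF FP] UN_I[OF GP] subsetI) simp
      ultimately have "sig x H \<in> E" by blast
      then show False using H by blast
    qed
  qed
  show ?thesis unfolding good_def using H ord sep by blast
qed

primrec st :: "(nat \<Rightarrow> 'a::semigroup_add) \<Rightarrow> nat \<Rightarrow> nat \<Rightarrow> nat set" where
  "st x 0 = (\<lambda>_. {})"
| "st x (Suc t) = (st x t)(t := (SOME H. good x (st x t) t H))"

definition HH :: "(nat \<Rightarrow> 'a::semigroup_add) \<Rightarrow> nat \<Rightarrow> nat set" where
  "HH x t = st x (Suc t) t"

lemma st_HH: "s < t \<Longrightarrow> st x t s = HH x s"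
proof (induction t)
  case 0 then show ?case by simp
next
  case (Suc t)
  then show ?case by (cases "s = t") (auto simp: HH_def)
qed

lemma HH_good:
  fixes x :: "nat \<Rightarrow> 'a::semigroup_add"
  assumes wlc: "left_weakly_cancellative TYPE('a)"
    and noid: "\<forall>e::'a. e + e \<noteq> e"
  shows "good x (st x t) t (HH x t)"
proof (induction t rule: less_induct)
  case (less t)
  have "\<forall>s<t. finite (st x t s) \<and> st x t s \<noteq> {}"
    using less st_HH unfolding good_def by metis
  then have "\<exists>H. good x (st x t) t H" by (rule good_ex[OF wlc noid])
  then have "good x (st x t) t (SOME H. good x (st x t) t H)" by (rule someI_ex)
  then show ?case by (simp add: HH_def)
qed


context
  fixes x :: "nat \<Rightarrow> 'a::semigroup_add"
  assumes wlc: "left_weakly_cancellative TYPE('a)"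
    and noid: "\<forall>e::'a. e + e \<noteq> e"
begin

lemma HH_fin: "finite (HH x t)" and HH_ne: "HH x t \<noteq> {}"
  using HH_good[OF wlc noid, of x t] unfolding good_def by auto

lemma HH_mono: "s < t \<Longrightarrow> a \<in> HH x s \<Longrightarrow> b \<in> HH x t \<Longrightarrow> a < b"
  using HH_good[OF wlc noid, of x t] st_HH[of s t x] unfolding good_def by auto

lemma HH_sep:
  assumes F: "F \<subseteq> {s. s < t \<and> col s = col t}" and G: "G \<subseteq> {s. s < t \<and> col s \<noteq> col t}" and "G \<noteq> {}"
  shows "sig x ((\<Union>s\<in>F. HH x s) \<union> HH x t) \<noteq> sig x (\<Union>s\<in>G. HH x s)"
proof -
  have "(\<Union>s\<in>F. st x t s) = (\<Union>s\<in>F. HH x s)" using F st_HH[of _ t x] by (intro SUP_cong) auto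
  moreover have "(\<Union>s\<in>G. st x t s) = (\<Union>s\<in>G. HH x s)" using G st_HH[of _ t x] by (intro SUP_cong) auto
  moreover have "sig x ((\<Union>s\<in>F. st x t s) \<union> HH x t) \<noteq> sig x (\<Union>s\<in>G. st x t s)"
    using HH_good[OF wlc noid, of x t] assms unfolding good_def by blast
  ultimately show ?thesis by simp
qed

lemma key_aux:
  assumes "finite F1" "F1 \<noteq> {}" "finite F2" "F2 \<noteq> {}"
    and c1: "\<forall>t\<in>F1. col t = k" and c2: "\<forall>t\<in>F2. col t = j" and "k \<noteq> j"
    and lt: "Max F2 < Max F1"
  shows "sig x (\<Union>t\<in>F1. HH x t) \<noteq> sig x (\<Union>t\<in>F2. HH x t)"
proof -
  define t where "t = Max F1"
  have tF: "t \<in> F1" using assms t_def by auto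
  define F where "F = F1 - {t}"
  have F: "F \<subseteq> {s. s < t \<and> col s = col t}"
    using assms tF unfolding F_def t_def by (auto simp: order.not_eq_order_implies_strict)
  have G: "F2 \<subseteq> {s. s < t \<and> col s \<noteq> col t}"
    using assms tF unfolding t_def by auto
  have "(\<Union>t\<in>F1. HH x t) = (\<Union>s\<in>F. HH x s) \<union> HH x t" using tF F_def by auto
  then show ?thesis using HH_sep[OF F G] assms by simp
qed

lemma key:
  assumes "finite F1" "F1 \<noteq> {}" "finite F2" "F2 \<noteq> {}"
    and c1: "\<forall>t\<in>F1. col t = k" and c2: "\<forall>t\<in>F2. col t = j" and "k \<noteq> j"
  shows "sig x (\<Union>t\<in>F1. HH x t) \<noteq> sig x (\<Union>t\<in>F2. HH x t)"
proof -
  have "Max F1 \<in> F1" "Max F2 \<in> F2" using assms by auto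
  then have "Max F1 \<noteq> Max F2" using c1 c2 \<open>k \<noteq> j\<close> by metis
  then consider "Max F2 < Max F1" | "Max F1 < Max F2" by linarith
  then show ?thesis
  proof cases
    case 1 then show ?thesis using key_aux assms by blast
  next
    case 2 then show ?thesis using key_aux[of F2 F1 j k] assms by metis
  qed
qed

end

lemma triangle_strict: "m < n \<Longrightarrow> triangle m < triangle n"
  by (induction n) (auto simp: less_Suc_eq)

lemma enc_mono: "n < m \<Longrightarrow> prod_encode (k, n) < prod_encode (k, m)"
  by (simp add: prod_encode_def triangle_strict)

lemma col_enc[simp]: "col (prod_encode (k, n)) = k"
  by (simp add: col_def)


theorem theorem2p1:
  fixes A :: "'a::semigroup_add set"
  assumes "infinite (UNIV :: 'a set)"
    and "left_weakly_cancellative TYPE('a)"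
    and "\<forall>e::'a. e + e \<noteq> e"
    and "IP_set A"
  shows "\<exists>P :: nat \<Rightarrow> 'a set. (\<Union>n. P n) = A \<and> (\<forall>m n. m \<noteq> n \<longrightarrow> P m \<inter> P n = {})
           \<and> (\<forall>n. IP_set (P n))"
proof -
  note wlc = assms(2) and noid = assms(3)
  obtain x where xA: "FS x \<subseteq> A" using assms(4) unfolding IP_set_def by blast
  define y where "y k n = sig x (HH x (prod_encode (k, n)))" for k n
  define B where "B k = FS (y k)" for k
  have Bsub: "B k \<subseteq> {sig x (\<Union>t\<in>F. HH x t) | F. finite F \<and> F \<noteq> {} \<and> (\<forall>t\<in>F. col t = k)}" for k
  proof
    fix v assume "v \<in> B k"
    then have "v \<in> FS (y k)" unfolding B_def .
    then obtain G where G0: "v = seqsum (y k) (sorted_list_of_set G)" "finite G" "G \<noteq> {}"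
      unfolding FS_def by blast
    then have G: "finite G" "G \<noteq> {}" "v = sig (y k) G" unfolding sig_def by simp_all
    have "sig (y k) G = sig (\<lambda>n. sig x (HH x (prod_encode (k, n)))) G"
      unfolding y_def by simp
    also have "\<dots> = sig x (\<Union>n\<in>G. HH x (prod_encode (k, n)))"
    proof (rule sig_blocks[OF _ _ _ G(1,2)])
      show "finite (HH x (prod_encode (k, n)))" for n using HH_fin[OF wlc noid] .
      show "HH x (prod_encode (k, n)) \<noteq> {}" for n using HH_ne[OF wlc noid] .
      show "a < b" if "n < m" "a \<in> HH x (prod_encode (k, n))" "b \<in> HH x (prod_encode (k, m))" for n m a b
        using HH_mono[OF wlc noid, of "prod_encode (k, n)" "prod_encode (k, m)" a x b] enc_mono[OF that(1)] that by blast
    qed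
    also have "\<dots> = sig x (\<Union>t\<in>(\<lambda>n. prod_encode (k, n)) ` G. HH x t)" by simp
    finally have "finite ((\<lambda>n. prod_encode (k, n)) ` G) \<and> (\<lambda>n. prod_encode (k, n)) ` G \<noteq> {}
       \<and> (\<forall>t\<in>(\<lambda>n. prod_encode (k, n)) ` G. col t = k) \<and> v = sig x (\<Union>t\<in>(\<lambda>n. prod_encode (k, n)) ` G. HH x t)"
      using G by simp
    then show "v \<in> {sig x (\<Union>t\<in>F. HH x t) | F. finite F \<and> F \<noteq> {} \<and> (\<forall>t\<in>F. col t = k)}"
      by blast
  qed
  have BA: "B k \<subseteq> A" for k
  proof
    fix v assume "v \<in> B k"
    then have "v \<in> {sig x (\<Union>t\<in>F. HH x t) | F. finite F \<and> F \<noteq> {} \<and> (\<forall>t\<in>F. col t = k)}"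
      by (rule subsetD[OF Bsub])
    then obtain F where F: "finite F" "F \<noteq> {}" "v = sig x (\<Union>t\<in>F. HH x t)" by blast
    have "v \<in> FS x" unfolding F(3) using F HH_fin[OF wlc noid] HH_ne[OF wlc noid]
      by (intro sig_in_FS) auto
    then show "v \<in> A" using xA by blast
  qed
  have Bdisj: "B k \<inter> B j = {}" if "k \<noteq> j" for k j
  proof (rule ccontr)
    assume "B k \<inter> B j \<noteq> {}"
    then obtain v where v: "v \<in> B k" "v \<in> B j" by blast
    have v1: "v \<in> {sig x (\<Union>t\<in>F. HH x t) | F. finite F \<and> F \<noteq> {} \<and> (\<forall>t\<in>F. col t = k)}"
      by (rule subsetD[OF Bsub v(1)])
    have v2: "v \<in> {sig x (\<Union>t\<in>F. HH x t) | F. finite F \<and> F \<noteq> {} \<and> (\<forall>t\<in>F. col t = j)}"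
      by (rule subsetD[OF Bsub v(2)])
    obtain F1 F2 where F1: "finite F1" "F1 \<noteq> {}" "\<forall>t\<in>F1. col t = k" "v = sig x (\<Union>t\<in>F1. HH x t)"
      and F2: "finite F2" "F2 \<noteq> {}" "\<forall>t\<in>F2. col t = j" "v = sig x (\<Union>t\<in>F2. HH x t)"
      using v1 v2 by blast
    have "sig x (\<Union>t\<in>F1. HH x t) \<noteq> sig x (\<Union>t\<in>F2. HH x t)"
      by (rule key[OF wlc noid F1(1,2) F2(1,2) F1(3) F2(3) that])
    then show False using F1(4) F2(4) by simp
  qed
  define P where "P n = (if n = 0 then A - (\<Union>k. B (Suc k)) else B n)" for n
  have "(\<Union>n. P n) = A"
  proof
    show "(\<Union>n. P n) \<subseteq> A" using BA unfolding P_def by auto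
    show "A \<subseteq> (\<Union>n. P n)"
    proof
      fix a assume "a \<in> A"
      show "a \<in> (\<Union>n. P n)"
      proof (cases "\<exists>k. a \<in> B (Suc k)")
        case True
        then obtain k where "a \<in> B (Suc k)" by blast
        then have "a \<in> P (Suc k)" unfolding P_def by simp
        then show ?thesis by blast
      next
        case False
        then have "a \<in> P 0" unfolding P_def using \<open>a \<in> A\<close> by auto
        then show ?thesis by blast
      qed
    qed
  qed
  moreover have "\<forall>m n. m \<noteq> n \<longrightarrow> P m \<inter> P n = {}"
  proof (intro allI impI)
    fix m n :: nat assume "m \<noteq> n"
    show "P m \<inter> P n = {}"
    proof (cases "m = 0 \<or> n = 0")
      case True
      have "P 0 \<inter> P (Suc i) = {}" for i unfolding P_def by auto
      moreover have "m = 0 \<and> (\<exists>i. n = Suc i) \<or> n = 0 \<and> (\<exists>i. m = Suc i)"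
        using True \<open>m \<noteq> n\<close> by (cases m; cases n) auto
      ultimately show ?thesis by (auto simp: Int_commute)
    next
      case False
      then show ?thesis using Bdisj \<open>m \<noteq> n\<close> unfolding P_def by simp
    qed
  qed
  moreover have "\<forall>n. IP_set (P n)"
  proof
    fix n
    show "IP_set (P n)"
    proof (cases "n = 0")
      case True
      have "B 0 \<subseteq> P 0"
      proof
        fix v assume v: "v \<in> B 0"
        have "v \<notin> B (Suc i)" for i using Bdisj[of 0 "Suc i"] v by auto
        then show "v \<in> P 0" unfolding P_def using BA v by auto
      qed
      then show ?thesis using True unfolding IP_set_def B_def by blast
    next
      case False
      then show ?thesis unfolding P_def IP_set_def B_def by auto
    qed
  qed
  ultimately show ?thesis by blast
qed

end
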